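(* Let $d\geq1$ be an integer and $n>d/2$ real. For all $k\in\mathbb R^d$, $$\frac{(1+|k|^2)^n}{(2\pi)^d}\,(G_{nd}\ast G_{nd})(k)=\mathscr S_{nd}\Big(\frac{|k|^2}{4}\Big),$$ where $G_{nd}(k):=(1+|k|^2)^{-n}$, $(F\ast G)(k):=\int_{\mathbb R^d}F(k-h)G(h)\,dh$, and $$\mathscr S_{nd}(u):=\frac{\Gamma(2n-d/2)}{(4\pi)^{d/2}\Gamma(2n)}(1+4u)^n\,F\!\left(2n-\tfrac d2,\,n,\,n+\tfrac12;\,-u\right),\qquad u\geq0.$$
   Context: $F(\alpha,\beta,\gamma;w)$ denotes the Gauss hypergeometric function ${}_2F_1$ and $\Gamma$ the Gamma function. *)

theory Defs
  imports "HOL-Analysis.Analysis"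
begin

definition hyp2F1_series :: "complex \<Rightarrow> complex \<Rightarrow> complex \<Rightarrow> complex \<Rightarrow> complex" where
  "hyp2F1_series a b c z =
     (\<Sum>j. pochhammer a j * pochhammer b j / (pochhammer c j * fact j) * z ^ j)"

definition cut_plane :: "complex set" where
  "cut_plane = UNIV - {z. Im z = 0 \<and> 1 \<le> Re z}"

text \<open>Gauss hypergeometric function 2F1: the (unique) analytic continuation of the
  series from the unit disc to the cut plane.\<close>
definition hyp2F1 :: "complex \<Rightarrow> complex \<Rightarrow> complex \<Rightarrow> complex \<Rightarrow> complex" where
  "hyp2F1 a b c z =
     (THE v. \<exists>f. f holomorphic_on cut_plane \<and>
                 (\<forall>w. norm w < 1 \<longrightarrow> f w = hyp2F1_series a b c w) \<and> f z = v)"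

definition G_nd :: "real \<Rightarrow> real ^ 'd \<Rightarrow> real" where
  "G_nd n k = (1 + norm k ^ 2) powr (- n)"

definition conv :: "(real ^ 'd \<Rightarrow> real) \<Rightarrow> (real ^ 'd \<Rightarrow> real) \<Rightarrow> real ^ 'd \<Rightarrow> real" where
  "conv F G k = (\<integral>h. F (k - h) * G h \<partial>lborel)"

definition S_nd :: "real \<Rightarrow> nat \<Rightarrow> real \<Rightarrow> complex" where
  "S_nd n d u =
     complex_of_real (Gamma (2*n - real d / 2) / ((4*pi) powr (real d / 2) * Gamma (2*n))
                      * (1 + 4*u) powr n)
     * hyp2F1 (of_real (2*n - real d / 2)) (of_real n) (of_real (n + 1/2)) (of_real (- u))"

end

theory Submission
  imports Defs "HOL-Complex_Analysis.Complex_Analysis" "HOL-Probability.Distributions"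
begin

lemma open_cut_plane: "open cut_plane"
proof -
  have "closed {z::complex. Im z = 0 \<and> 1 \<le> Re z}"
    by (intro closed_Collect_conj closed_Collect_eq closed_Collect_le continuous_intros)
  thus ?thesis unfolding cut_plane_def by (simp add: open_Diff)
qed

lemma connected_cut_plane: "connected cut_plane"
proof (rule starlike_imp_connected)
  show "starlike cut_plane" unfolding starlike_def
  proof (intro bexI ballI subsetI)
    show "0 \<in> cut_plane" by (simp add: cut_plane_def)
    fix x y assume x: "x \<in> cut_plane" and y: "y \<in> closed_segment 0 x"
    then obtain u where u: "0 \<le> u" "u \<le> 1" "y = u *\<^sub>R x" by (auto simp: closed_segment_def)
    show "y \<in> cut_plane"
    proof (rule ccontr)
      assume "y \<notin> cut_plane"
      hence "Im y = 0" "1 \<le> Re y" by (auto simp: cut_plane_def)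
      with u have "u > 0" by (cases "u = 0") auto
      with u \<open>Im y = 0\<close> have "Im x = 0" by simp
      have "1 \<le> u * Re x" using u \<open>1 \<le> Re y\<close> by simp
      also have "\<dots> \<le> Re x" proof (cases "Re x \<ge> 0")
        case True thus ?thesis using u by (simp add: mult_left_le_one_le)
      next case False thus ?thesis using \<open>1 \<le> u * Re x\<close> \<open>u > 0\<close> mult_pos_neg[of u "Re x"] by linarith
      qed
      finally show False using x \<open>Im x = 0\<close> by (auto simp: cut_plane_def)
    qed
  qed
qed

lemma cut_plane_nonpos:
  assumes "z \<in> cut_plane" "0 \<le> s" "s \<le> 1"
  shows "1 - z * complex_of_real s \<notin> \<real>\<^sub>\<le>\<^sub>0"
proof
  assume "1 - z * complex_of_real s \<in> \<real>\<^sub>\<le>\<^sub>0"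
  hence A: "1 - s * Re z \<le> 0" "s * Im z = 0" by (auto simp: complex_nonpos_Reals_iff mult.commute)
  with assms have "s > 0" by (cases "s = 0") auto
  with A have "Im z = 0" by simp
  with assms have "Re z < 1" by (auto simp: cut_plane_def)
  have "s * Re z < 1"
  proof (cases "Re z \<ge> 0")
    case True
    have "s * Re z \<le> Re z" using True assms by (simp add: mult_left_le_one_le)
    thus ?thesis using \<open>Re z < 1\<close> by simp
  next
    case False thus ?thesis using \<open>s > 0\<close> mult_pos_neg[of s "Re z"] by linarith
  qed
  with A show False by simp
qed

lemma cut_plane_nonpos':
  assumes "z \<in> cut_plane" "0 \<le> s" "s \<le> 1"
  shows "1 - z * complex_of_real s \<noteq> 0"
  using cut_plane_nonpos[OF assms] by auto


definition Phi :: "real \<Rightarrow> real \<Rightarrow> complex \<Rightarrow> complex" where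
 "Phi p a z = integral {0..pi} (\<lambda>t. complex_of_real (sin t powr (2*p-1)) *
      (1 - z * complex_of_real ((sin t)^2)) powr complex_of_real (-a))"

lemma sin_sq_bounds: "0 \<le> (sin t)^2" "(sin t)^2 \<le> (1::real)"
  by (simp_all add: abs_square_le_1)



lemma Phi_holo:
  assumes "p > 1/2"
  shows "Phi p a holomorphic_on cut_plane"
proof -
  define f where "f = (\<lambda>z t. complex_of_real (sin t powr (2*p-1)) *
      (1 - z * complex_of_real ((sin t)^2)) powr complex_of_real (-a))"
  define fx where "fx = (\<lambda>z t. complex_of_real (sin t powr (2*p-1)) *
      (complex_of_real (-a) * (1 - z * complex_of_real ((sin t)^2)) powr (complex_of_real (-a) - 1)
        * (- complex_of_real ((sin t)^2))))"
  have contS: "continuous_on {0..pi} (\<lambda>t. sin t powr (2*p-1))"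
    using assms by (intro continuous_on_powr' continuous_intros) (auto simp: sin_ge_zero)
  show ?thesis unfolding holomorphic_on_def
  proof
    fix z0 assume z0: "z0 \<in> cut_plane"
    obtain r where r: "r > 0" "ball z0 r \<subseteq> cut_plane"
      using open_cut_plane z0 open_contains_ball by blast
    have "((\<lambda>z. integral (cbox 0 pi) (f z)) has_field_derivative integral (cbox 0 pi) (fx z0)) (at z0 within ball z0 r)"
    proof (rule leibniz_rule_field_derivative)
      fix z t assume z: "z \<in> ball z0 r" and t: "t \<in> cbox 0 pi"
      have "1 - z * complex_of_real ((sin t)^2) \<notin> \<real>\<^sub>\<le>\<^sub>0"
        using r z by (intro cut_plane_nonpos) (auto simp: sin_sq_bounds)
      thus "((\<lambda>z. f z t) has_field_derivative fx z t) (at z within ball z0 r)"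
        unfolding f_def fx_def
        by (auto intro!: derivative_eq_intros)
    next
      fix z assume z: "z \<in> ball z0 r"
      have nz: "1 - z * complex_of_real ((sin t)^2) \<notin> \<real>\<^sub>\<le>\<^sub>0" for t
        using r z by (intro cut_plane_nonpos) (auto simp: sin_sq_bounds)
      have c1: "continuous_on {0..pi} (\<lambda>t. (1 - z * complex_of_real ((sin t)^2)) powr complex_of_real (-a))"
      proof (rule continuous_on_powr_complex)
        show "{0..pi} \<subseteq> {t. 0 \<le> Re (1 - z * complex_of_real ((sin t)^2)) \<or> Im (1 - z * complex_of_real ((sin t)^2)) \<noteq> 0}"
        proof (intro subsetI CollectI)
          fix t :: real
          from nz[of t] show "0 \<le> Re (1 - z * complex_of_real ((sin t)^2)) \<or> Im (1 - z * complex_of_real ((sin t)^2)) \<noteq> 0"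
            unfolding complex_nonpos_Reals_iff by linarith
        qed
        show "\<And>t. t \<in> {0..pi} \<Longrightarrow> 1 - z * complex_of_real ((sin t)^2) = 0 \<Longrightarrow> 0 < Re (complex_of_real (-a))"
          using nz by (metis complex_nonpos_Reals_iff order.refl zero_complex.sel)
      qed (intro continuous_intros)+
      have "continuous_on {0..pi} (f z)"
        unfolding f_def by (rule continuous_on_mult[OF continuous_on_of_real[OF contS] c1])
      thus "f z integrable_on cbox 0 pi"
        by (simp add: integrable_continuous_interval)
    next
      have c0: "continuous_on (ball z0 r \<times> cbox 0 pi) (\<lambda>x. complex_of_real (sin (snd x) powr (2*p-1)))"
          by (intro continuous_on_of_real continuous_on_compose2[OF contS] continuous_intros) auto
      have nz: "1 - fst x * complex_of_real ((sin (snd x))^2) \<notin> \<real>\<^sub>\<le>\<^sub>0" if "x \<in> ball z0 r \<times> cbox 0 pi" for x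
        using r that by (intro cut_plane_nonpos) (auto simp: sin_sq_bounds)
      have c1: "continuous_on (ball z0 r \<times> cbox 0 pi) (\<lambda>x. (1 - fst x * complex_of_real ((sin (snd x))^2)) powr (complex_of_real (-a) - 1))"
      proof (rule continuous_on_powr_complex)
        show "ball z0 r \<times> cbox 0 pi \<subseteq> {x. 0 \<le> Re (1 - fst x * complex_of_real ((sin (snd x))^2)) \<or> Im (1 - fst x * complex_of_real ((sin (snd x))^2)) \<noteq> 0}"
        proof (intro subsetI CollectI)
          fix x assume "x \<in> ball z0 r \<times> cbox 0 pi"
          from nz[OF this] show "0 \<le> Re (1 - fst x * complex_of_real ((sin (snd x))^2)) \<or> Im (1 - fst x * complex_of_real ((sin (snd x))^2)) \<noteq> 0"
            unfolding complex_nonpos_Reals_iff by linarith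
        qed
        show "\<And>x. x \<in> ball z0 r \<times> cbox 0 pi \<Longrightarrow> 1 - fst x * complex_of_real ((sin (snd x))^2) = 0 \<Longrightarrow> 0 < Re (complex_of_real (-a) - 1)"
          using nz by (metis complex_nonpos_Reals_iff order.refl zero_complex.sel)
      qed (intro continuous_intros)+
      show "continuous_on (ball z0 r \<times> cbox 0 pi) (\<lambda>(z, t). fx z t)"
        unfolding fx_def case_prod_unfold
        by (intro c0 c1 continuous_on_mult continuous_intros)
    qed (use r in auto)
    hence "((\<lambda>z. integral (cbox 0 pi) (f z)) has_field_derivative integral (cbox 0 pi) (fx z0)) (at z0)"
      using r by (simp only: at_within_open[OF centre_in_ball[THEN iffD2, OF r(1)] open_ball])
    hence "Phi p a field_differentiable at z0"
      unfolding Phi_def f_def field_differentiable_def cbox_interval by blast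
    thus "Phi p a field_differentiable at z0 within cut_plane"
      using field_differentiable_at_within by blast
  qed
qed


definition Isin :: "real \<Rightarrow> real" where
  "Isin q = integral {0..pi} (\<lambda>t. sin t powr q)"

lemma sinpow_cont: "q > 0 \<Longrightarrow> continuous_on {0..pi} (\<lambda>t. sin t powr q)"
  by (intro continuous_on_powr' continuous_intros) (auto simp: sin_ge_zero)

lemma sinpow_int: "q > 0 \<Longrightarrow> ((\<lambda>t. sin t powr q) has_integral Isin q) {0..pi}"
  unfolding Isin_def using sinpow_cont integrable_continuous_interval by blast

lemma Isin_rec:
  assumes q: "q > 0"
  shows "(q+2) * Isin (q+2) = (q+1) * Isin q"
proof -
  define F where "F = (\<lambda>t. sin t powr (q+1) * cos t)"
  define F' where "F' = (\<lambda>t. (q+1) * sin t powr q - (q+2) * sin t powr (q+2))"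
  have "(F' has_integral (F pi - F 0)) {0..pi}"
  proof (rule fundamental_theorem_of_calculus_interior)
    show "continuous_on {0..pi} F" unfolding F_def
      using q by (intro continuous_intros sinpow_cont) auto
    fix t assume t: "t \<in> {0<..<pi}"
    hence s: "sin t > 0" by (auto intro: sin_gt_zero)
    have "(F has_real_derivative ((q+1) * sin t powr (q+1-1) * cos t * cos t + sin t powr (q+1) * (- sin t))) (at t)"
      unfolding F_def using s by (auto intro!: derivative_eq_intros)
    also have "(q+1) * sin t powr (q+1-1) * cos t * cos t + sin t powr (q+1) * (- sin t) = F' t"
    proof -
      have e1: "sin t powr (q+1) = sin t powr q * sin t"
        using s by (simp add: powr_add)
      have e2: "sin t powr (q+2) = sin t powr q * (sin t * sin t)"
        using s by (simp add: powr_add powr_numeral power2_eq_square)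
      have e3: "cos t * cos t = 1 - sin t * sin t" using sin_squared_eq[of t] by (simp add: power2_eq_square)
      have "(q+1) * sin t powr (q+1-1) * cos t * cos t + sin t powr (q+1) * (- sin t)
         = (q+1) * sin t powr q * (cos t * cos t) - sin t powr q * (sin t * sin t)"
        unfolding e1 by (simp add: algebra_simps)
      also have "\<dots> = (q+1) * sin t powr q * (1 - sin t * sin t) - sin t powr q * (sin t * sin t)"
        unfolding e3 ..
      also have "\<dots> = F' t" unfolding F'_def e2 by (simp add: algebra_simps)
      finally show ?thesis .
    qed
    finally show "(F has_vector_derivative F' t) (at t)"
      by (simp add: has_real_derivative_iff_has_vector_derivative)
  qed (use pi_ge_zero in auto)
  moreover have "F pi - F 0 = 0" by (simp add: F_def)
  ultimately have "(F' has_integral 0) {0..pi}" by simp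
  moreover have "(F' has_integral ((q+1) * Isin q - (q+2) * Isin (q+2))) {0..pi}"
    unfolding F'_def using q
    by (intro has_integral_diff has_integral_mult_right sinpow_int) auto
  ultimately have "0 = (q+1) * Isin q - (q+2) * Isin (q+2)" by (rule has_integral_unique)
  thus ?thesis by simp
qed

lemma Isin_poch:
  assumes p: "p > 1/2"
  shows "Isin (2*p-1+2*real j) = Isin (2*p-1) * pochhammer p j / pochhammer (p+1/2) j"
proof (induction j)
  case 0 thus ?case by simp
next
  case (Suc j)
  have pos: "pochhammer (p+1/2) j > 0" using p by (intro pochhammer_pos) auto
  have "(2*p-1+2*real j + 2) * Isin (2*p-1+2*real j + 2) = (2*p-1+2*real j + 1) * Isin (2*p-1+2*real j)"
    using p by (intro Isin_rec) auto
  hence "Isin (2*p-1+2*real (Suc j)) = (p + j) / (p + 1/2 + j) * Isin (2*p-1+2*real j)"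
    using p by (simp add: field_simps)
  also have "\<dots> = Isin (2*p-1) * pochhammer p (Suc j) / pochhammer (p+1/2) (Suc j)"
    using pos p unfolding Suc by (simp add: pochhammer_rec' field_simps)
  finally show ?case .
qed


lemma binom_poch:
  fixes w :: complex
  assumes "norm w < 1"
  shows "(\<lambda>j. complex_of_real (pochhammer a j / fact j) * w^j) sums (1 - w) powr complex_of_real (-a)"
proof -
  have "norm (-w) < 1" using assms by simp
  from gen_binomial_complex[OF this, of "complex_of_real (-a)"]
  have "(\<lambda>j. (complex_of_real (-a) gchoose j) * (-w)^j) sums (1 - w) powr complex_of_real (-a)"
    by simp
  also have "(\<lambda>j. (complex_of_real (-a) gchoose j) * (-w)^j) = (\<lambda>j. complex_of_real (pochhammer a j / fact j) * w^j)"
  proof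
    fix j
    have A: "(complex_of_real (-a) gchoose j) = (-1)^j * pochhammer (complex_of_real a) j / fact j"
      unfolding gbinomial_pochhammer by simp
    have B: "(-w)^j = (-1)^j * w^j" by (rule power_minus)
    have C: "(-1::complex)^j * (-1)^j = 1" by (subst power_mult_distrib[symmetric]) simp
    have "(complex_of_real (-a) gchoose j) * (-w)^j = ((-1)^j * (-1)^j) * (pochhammer (complex_of_real a) j / fact j * w^j)"
      unfolding A B by (simp only: mult_ac times_divide_eq_left times_divide_eq_right)
    also have "\<dots> = complex_of_real (pochhammer a j / fact j) * w^j"
      unfolding C pochhammer_of_real by simp
    finally show "(complex_of_real (-a) gchoose j) * (-w)^j = complex_of_real (pochhammer a j / fact j) * w^j" .
  qed
  finally show ?thesis .
qed

lemma sin_powr_le1: "t \<in> {0..pi} \<Longrightarrow> q > 0 \<Longrightarrow> sin t powr q \<le> 1"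
  using powr_mono2[of q "sin t" 1] sin_ge_zero[of t] by auto

lemma sin_powr_add:
  assumes "t \<in> {0..pi}" "q > 0"
  shows "sin t powr q * ((sin t)^2)^j = sin t powr (q + 2 * real j)"
proof (cases "sin t = 0")
  case True thus ?thesis using assms by (simp add: power_0_left)
next
  case False
  hence "sin t > 0" using assms sin_ge_zero[of t] by auto
  have "sin t powr (2*real j) = sin t ^ (2*j)" using powr_realpow[of "sin t" "2*j"] \<open>sin t > 0\<close> by simp
  thus ?thesis using \<open>sin t > 0\<close> by (simp add: powr_add power_mult[symmetric])
qed

lemma Phi_series:
  assumes p: "p > 1/2" and z: "norm z < 1"
  shows "(\<lambda>j. complex_of_real (pochhammer a j / fact j * Isin (2*p-1+2*real j)) * z^j) sums Phi p a z"
proof -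
  define g where "g = (\<lambda>j t. complex_of_real (sin t powr (2*p-1)) * (complex_of_real (pochhammer a j / fact j) * (z * complex_of_real ((sin t)^2))^j))"
  define h where "h = (\<lambda>t. complex_of_real (sin t powr (2*p-1)) *
      (1 - z * complex_of_real ((sin t)^2)) powr complex_of_real (-a))"
  define M where "M = (\<lambda>j. norm (complex_of_real (pochhammer a j / fact j) * z^j))"
  have sums_t: "(\<lambda>j. g j t) sums h t" if "t \<in> {0..pi}" for t
  proof -
    have "norm (z * complex_of_real ((sin t)^2)) \<le> norm z * 1"
      unfolding norm_mult by (intro mult_left_mono)
        (use power_le_one[OF abs_ge_zero abs_sin_le_one, of t 2] in \<open>auto simp: norm_power\<close>)
    hence "norm (z * complex_of_real ((sin t)^2)) < 1" using z by simp
    from sums_mult[OF binom_poch[OF this, of a], of "complex_of_real (sin t powr (2*p-1))"]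
    show ?thesis unfolding g_def h_def .
  qed
  have summM: "summable M"
  proof -
    define r where "r = (1 + norm z) / 2"
    have nr: "norm (complex_of_real r) = r" unfolding norm_of_real r_def by simp
    have "norm (complex_of_real r) < 1" unfolding nr using z by (simp add: r_def)
    from sums_summable[OF binom_poch[OF this, of a]]
    have "summable (\<lambda>j. complex_of_real (pochhammer a j / fact j) * (complex_of_real r)^j)" .
    moreover have "norm z < norm (complex_of_real r)" unfolding nr using z by (simp add: r_def)
    ultimately show ?thesis unfolding M_def by (rule powser_insidea)
  qed
  have bound: "norm (g j t) \<le> M j" if "t \<in> {0..pi}" for j t
  proof -
    have "norm (g j t) = \<bar>sin t powr (2*p-1)\<bar> * (norm (complex_of_real (pochhammer a j / fact j)) * (norm z * \<bar>(sin t)^2\<bar>)^j)"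
      unfolding g_def norm_mult norm_power norm_of_real ..
    also have "\<dots> = sin t powr (2*p-1) * (norm (complex_of_real (pochhammer a j / fact j)) * (norm z * (sin t)^2)^j)"
      by simp
    also have "\<dots> \<le> 1 * (norm (complex_of_real (pochhammer a j / fact j)) * (norm z * 1)^j)"
      using that p sin_powr_le1[of t "2*p-1"]
      by (intro mult_mono mult_left_mono power_mono) (auto simp: sin_sq_bounds)
    finally show ?thesis unfolding M_def norm_mult norm_power by simp
  qed
  have ul: "uniform_limit {0..pi} (\<lambda>n t. \<Sum>j<n. g j t) (\<lambda>t. suminf (\<lambda>j. g j t)) sequentially"
    by (rule Weierstrass_m_test[OF bound summM])
  have ul': "uniform_limit {0..pi} (\<lambda>n t. \<Sum>j<n. g j t) h sequentially"
  proof -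
    have "uniform_limit {0..pi} (\<lambda>n t. \<Sum>j<n. g j t) h sequentially =
          uniform_limit {0..pi} (\<lambda>n t. \<Sum>j<n. g j t) (\<lambda>t. suminf (\<lambda>j. g j t)) sequentially"
      by (rule uniform_limit_cong) (auto simp: sums_unique[OF sums_t])
    with ul show ?thesis by simp
  qed
  have contg: "continuous_on {0..pi} (g j)" for j
    unfolding g_def
    by (intro continuous_intros continuous_on_of_real[OF sinpow_cont]) (use p in auto)
  have gint: "(g j has_integral (complex_of_real (pochhammer a j / fact j * Isin (2*p-1+2*real j)) * z^j)) {0..pi}" for j
  proof -
    have "((\<lambda>t. complex_of_real (pochhammer a j / fact j * sin t powr (2*p-1+2*real j)) * z^j) has_integral
           (complex_of_real (pochhammer a j / fact j * Isin (2*p-1+2*real j)) * z^j)) {0..pi}"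
      using p by (intro has_integral_mult_left has_integral_of_real has_integral_mult_right sinpow_int) auto
    moreover have "g j t = complex_of_real (pochhammer a j / fact j * sin t powr (2*p-1+2*real j)) * z^j"
      if "t \<in> {0..pi}" for t
    proof -
      have "g j t = complex_of_real (pochhammer a j / fact j * (sin t powr (2*p-1) * ((sin t)^2)^j)) * z^j"
        unfolding g_def by (simp add: power_mult_distrib)
      also have "sin t powr (2*p-1) * ((sin t)^2)^j = sin t powr (2*p-1+2*real j)"
        using that p by (intro sin_powr_add) auto
      finally show ?thesis .
    qed
    ultimately show ?thesis
      by (metis (no_types, lifting) has_integral_eq)
  qed
  obtain I J where I: "\<And>n. ((\<lambda>t. \<Sum>j<n. g j t) has_integral I n) {0..pi}"
    and J: "(h has_integral J) {0..pi}" and IJ: "I \<longlonglongrightarrow> J"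
    by (rule uniform_limit_integral[OF ul']) (auto intro!: continuous_on_sum contg)
  have Ieq: "I = (\<lambda>n. \<Sum>j<n. complex_of_real (pochhammer a j / fact j * Isin (2*p-1+2*real j)) * z^j)"
  proof
    fix n show "I n = (\<Sum>j<n. complex_of_real (pochhammer a j / fact j * Isin (2*p-1+2*real j)) * z^j)"
      using has_integral_unique[OF I[of n] has_integral_sum[OF _ gint, of "{..<n}"]] by simp
  qed
  have "(\<lambda>n. \<Sum>j<n. complex_of_real (pochhammer a j / fact j * Isin (2*p-1+2*real j)) * z^j) \<longlonglongrightarrow> J"
    using IJ unfolding Ieq .
  moreover have "J = Phi p a z" unfolding Phi_def using J h_def by (simp add: integral_unique)
  ultimately show ?thesis unfolding sums_def by (simp only:)
qed


lemma ball_cut_plane: "ball 0 1 \<subseteq> cut_plane"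
proof
  fix z :: complex assume "z \<in> ball 0 1"
  hence "norm z < 1" by simp
  hence "Re z < 1" using complex_Re_le_cmod[of z] by linarith
  thus "z \<in> cut_plane" by (auto simp: cut_plane_def)
qed

lemma hyp2F1_Phi:
  assumes p: "p > 1/2" and I0: "Isin (2*p-1) \<noteq> 0" and z0: "z0 \<in> cut_plane"
  shows "hyp2F1 (complex_of_real a) (complex_of_real p) (complex_of_real (p+1/2)) z0
          = Phi p a z0 / complex_of_real (Isin (2*p-1))"
proof -
  define f where "f = (\<lambda>z. Phi p a z / complex_of_real (Isin (2*p-1)))"
  have holo: "f holomorphic_on cut_plane"
    unfolding f_def using Phi_holo[OF p] by (intro holomorphic_intros) auto
  have ser: "f w = hyp2F1_series (complex_of_real a) (complex_of_real p) (complex_of_real (p+1/2)) w"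
    if w: "norm w < 1" for w
  proof -
    have "(\<lambda>j. complex_of_real (pochhammer a j / fact j * Isin (2*p-1+2*real j)) * w^j / complex_of_real (Isin (2*p-1))) sums f w"
      unfolding f_def by (intro sums_divide Phi_series p w)
    also have "(\<lambda>j. complex_of_real (pochhammer a j / fact j * Isin (2*p-1+2*real j)) * w^j / complex_of_real (Isin (2*p-1)))
       = (\<lambda>j. pochhammer (complex_of_real a) j * pochhammer (complex_of_real p) j /
              (pochhammer (complex_of_real (p+1/2)) j * fact j) * w ^ j)"
    proof
      fix j
      have pos: "pochhammer (p+1/2) j > 0" using p by (intro pochhammer_pos) auto
      show "complex_of_real (pochhammer a j / fact j * Isin (2*p-1+2*real j)) * w^j / complex_of_real (Isin (2*p-1))
         = pochhammer (complex_of_real a) j * pochhammer (complex_of_real p) j /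
              (pochhammer (complex_of_real (p+1/2)) j * fact j) * w ^ j"
        unfolding Isin_poch[OF p] pochhammer_of_real
        using I0 pos by (simp add: field_simps)
    qed
    finally show ?thesis unfolding hyp2F1_series_def by (simp add: sums_iff)
  qed
  have uniq: "v = f z0" if g: "g holomorphic_on cut_plane"
      "\<forall>w. norm w < 1 \<longrightarrow> g w = hyp2F1_series (complex_of_real a) (complex_of_real p) (complex_of_real (p+1/2)) w"
      "g z0 = v" for g v
  proof -
    have "g z0 = f z0"
    proof (rule analytic_continuation_open[of "ball 0 1" cut_plane g f z0])
      show "\<And>z. z \<in> ball 0 1 \<Longrightarrow> g z = f z" using g(2) ser by simp
    qed (use g(1) holo z0 open_cut_plane connected_cut_plane ball_cut_plane in auto)
    thus ?thesis using g(3) by simp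
  qed
  have "hyp2F1 (complex_of_real a) (complex_of_real p) (complex_of_real (p+1/2)) z0 = f z0"
    unfolding hyp2F1_def
    by (rule the_equality) (use holo ser uniq in blast)+
  thus ?thesis by (simp add: f_def)
qed


lemma gauss1:
  assumes x: "x > (0::real)"
  shows "(\<integral>\<^sup>+y. ennreal (exp (- x * y^2)) \<partial>lborel) = ennreal (sqrt (pi / x))"
proof -
  define \<sigma> where "\<sigma> = 1 / sqrt (2 * x)"
  have s2: "2 * \<sigma>^2 = 1 / x" using x by (simp add: \<sigma>_def power_divide)
  have eq: "exp (- x * y^2) = sqrt (pi / x) * normal_density 0 \<sigma> y" for y
  proof -
    have "2 * pi * \<sigma>^2 = pi * (2 * \<sigma>^2)" by simp
    hence "sqrt (2 * pi * \<sigma>^2) = sqrt (pi / x)" unfolding s2 by simp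
    moreover have "(- (y^2)) / (2 * \<sigma>^2) = - x * y^2" unfolding s2 using x by simp
    ultimately show ?thesis using x by (simp add: normal_density_def)
  qed
  have "(\<integral>\<^sup>+y. ennreal (exp (- x * y^2)) \<partial>lborel) = (\<integral>\<^sup>+y. ennreal (sqrt (pi / x)) * ennreal (normal_density 0 \<sigma> y) \<partial>lborel)"
    by (intro nn_integral_cong) (subst eq, rule ennreal_mult, use x in auto)
  also have "\<dots> = ennreal (sqrt (pi / x)) * (\<integral>\<^sup>+y. ennreal (normal_density 0 \<sigma> y) \<partial>lborel)"
    by (rule nn_integral_cmult) simp
  also have "(\<integral>\<^sup>+y. ennreal (normal_density 0 \<sigma> y) \<partial>lborel) = 1"
  proof -
    have sp: "\<sigma> > 0" using x by (simp add: \<sigma>_def)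
    show ?thesis
      by (subst nn_integral_eq_integral) (auto simp: integrable_normal_density[OF sp] integral_normal_density[OF sp])
  qed
  finally show ?thesis by simp
qed

lemma gauss:
  assumes x: "x > (0::real)"
  shows "(\<integral>\<^sup>+(h::'a::euclidean_space). ennreal (exp (- x * norm h^2)) \<partial>lborel) = ennreal ((pi / x) powr (DIM('a) / 2))"
proof -
  have "(\<integral>\<^sup>+(h::'a). ennreal (exp (- x * norm h^2)) \<partial>lborel) = (\<integral>\<^sup>+(h::'a). (\<Prod>b\<in>Basis. ennreal (exp (- x * (h \<bullet> b)^2))) \<partial>lborel)"
  proof (intro nn_integral_cong)
    fix h :: 'a
    have "norm h^2 = (\<Sum>b\<in>Basis. (h \<bullet> b)^2)"
      unfolding power2_norm_eq_inner by (subst euclidean_inner) (simp add: power2_eq_square)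
    hence "exp (- x * norm h^2) = (\<Prod>b\<in>Basis. exp (- x * (h \<bullet> b)^2))"
      by (simp add: sum_distrib_left exp_sum)
    thus "ennreal (exp (- x * norm h^2)) = (\<Prod>b\<in>Basis. ennreal (exp (- x * (h \<bullet> b)^2)))"
      by (simp add: prod_ennreal)
  qed
  also have "\<dots> = (\<Prod>b\<in>(Basis::'a set). (\<integral>\<^sup>+y. ennreal (exp (- x * y^2)) \<partial>lborel))"
    by (rule nn_integral_lborel_prod[where f = "\<lambda>b y. ennreal (exp (- x * y^2))"]) auto
  also have "\<dots> = (\<Prod>b\<in>(Basis::'a set). ennreal (sqrt (pi / x)))" using gauss1[OF x] by simp
  also have "\<dots> = ennreal (sqrt (pi / x) ^ DIM('a))" using ennreal_power[of "sqrt (pi / x)" "DIM('a)"] x by simp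
  also have "sqrt (pi / x) ^ DIM('a) = (pi / x) powr (DIM('a) / 2)"
    using x by (simp add: sqrt_def root_powr_inverse powr_realpow[symmetric] powr_powr)
  finally show ?thesis .
qed


lemma gamma_scaled:
  assumes q: "q > 0" and c: "c > (0::real)"
  shows "(\<integral>\<^sup>+x. ennreal (indicator {0..} x * x powr (q-1) * exp (- c * x)) \<partial>lborel) = ennreal (Gamma q * c powr (-q))"
proof -
  define T where "T = (\<integral>\<^sup>+x. ennreal (indicator {0..} x * x powr (q-1) * exp (- c * x)) \<partial>lborel)"
  have "ennreal (Gamma q) = (\<integral>\<^sup>+y. ennreal (indicator {0..} y * y powr (q - 1) / exp y) \<partial>lborel)"
    by (rule Gamma_conv_nn_integral_real[OF q])
  also have "\<dots> = ennreal \<bar>c\<bar> * (\<integral>\<^sup>+x. ennreal (indicator {0..} (0 + c * x) * (0 + c * x) powr (q - 1) / exp (0 + c * x)) \<partial>lborel)"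
    by (rule nn_integral_real_affine) (use c in auto)
  also have "(\<integral>\<^sup>+x. ennreal (indicator {0..} (0 + c * x) * (0 + c * x) powr (q - 1) / exp (0 + c * x)) \<partial>lborel)
      = (\<integral>\<^sup>+x. ennreal (c powr (q-1)) * ennreal (indicator {0..} x * x powr (q-1) * exp (- c * x)) \<partial>lborel)"
  proof (intro nn_integral_cong)
    fix x :: real
    show "ennreal (indicator {0..} (0 + c * x) * (0 + c * x) powr (q - 1) / exp (0 + c * x)) =
          ennreal (c powr (q-1)) * ennreal (indicator {0..} x * x powr (q-1) * exp (- c * x))"
    proof (cases "x \<ge> 0")
      case True
      have "indicator {0..} (0 + c * x) * (0 + c * x) powr (q - 1) / exp (0 + c * x) =
            c powr (q-1) * (indicator {0..} x * x powr (q-1) * exp (- c * x))"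
        using True c by (simp add: powr_mult exp_minus field_simps indicator_def)
      thus ?thesis using True c by (simp add: ennreal_mult)
    next
      case False
      hence "c * x < 0" using c by (simp add: mult_pos_neg)
      thus ?thesis using False by (simp add: indicator_def)
    qed
  qed
  also have "\<dots> = ennreal (c powr (q-1)) * T"
    unfolding T_def by (rule nn_integral_cmult) simp
  finally have G: "ennreal (Gamma q) = ennreal (c powr q) * T"
    using c by (simp add: mult.assoc[symmetric] ennreal_mult[symmetric] powr_diff)
  have "T = ennreal (c powr (-q) * c powr q) * T" using c by (simp add: powr_minus)
  also have "\<dots> = ennreal (c powr (-q)) * (ennreal (c powr q) * T)" by (simp add: ennreal_mult mult.assoc)
  also have "\<dots> = ennreal (Gamma q * c powr (-q))" unfolding G[symmetric]
    using q c by (simp add: ennreal_mult[symmetric] mult.commute Gamma_real_pos less_imp_le)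
  finally show ?thesis unfolding T_def .
qed


lemma radial:
  assumes c: "c > (0::real)" and s: "s > DIM('a) / 2"
  shows "(\<integral>\<^sup>+(h::'a::euclidean_space). ennreal ((c + norm h^2) powr (-s)) \<partial>lborel)
    = ennreal (pi powr (DIM('a)/2) * Gamma (s - DIM('a)/2) / Gamma s * c powr (DIM('a)/2 - s))"
proof -
  define D where "D = real DIM('a) / 2"
  have D0: "D > 0" by (simp add: D_def)
  have s0: "s > 0" using s D0 D_def by linarith
  have Gs: "Gamma s > 0" using s0 by (rule Gamma_real_pos)
  define F where "F = (\<lambda>(h::'a) x::real. ennreal (indicator {0..} x * x powr (s-1) * exp (- (c + norm h^2) * x)))"
  have step1: "ennreal ((c + norm h^2) powr (-s)) = ennreal (1 / Gamma s) * (\<integral>\<^sup>+x. F h x \<partial>lborel)" for h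
  proof -
    have cp: "c + norm h^2 > 0" using c by (simp add: add_pos_nonneg)
    have "(\<integral>\<^sup>+x. F h x \<partial>lborel) = ennreal (Gamma s * (c + norm h^2) powr (-s))"
      unfolding F_def by (rule gamma_scaled[OF s0 cp])
    thus ?thesis using Gs by (simp add: ennreal_mult[symmetric])
  qed
  have meas: "case_prod F \<in> borel_measurable (lborel \<Otimes>\<^sub>M lborel)"
    unfolding F_def by measurable
  have "(\<integral>\<^sup>+(h::'a). ennreal ((c + norm h^2) powr (-s)) \<partial>lborel) = (\<integral>\<^sup>+(h::'a). ennreal (1 / Gamma s) * (\<integral>\<^sup>+x. F h x \<partial>lborel) \<partial>lborel)"
    by (rule nn_integral_cong) (rule step1)
  also have "\<dots> = ennreal (1 / Gamma s) * (\<integral>\<^sup>+(h::'a). (\<integral>\<^sup>+x. F h x \<partial>lborel) \<partial>lborel)"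
    by (rule nn_integral_cmult) (use meas in measurable)
  also have "(\<integral>\<^sup>+(h::'a). (\<integral>\<^sup>+x. F h x \<partial>lborel) \<partial>lborel) = (\<integral>\<^sup>+x. (\<integral>\<^sup>+(h::'a). F h x \<partial>lborel) \<partial>lborel)"
    by (rule lborel_pair.Fubini'[OF meas, symmetric])
  also have "\<dots> = (\<integral>\<^sup>+x. ennreal (pi powr D) * ennreal (indicator {0..} x * x powr (s - D - 1) * exp (- c * x)) \<partial>lborel)"
  proof (intro nn_integral_cong)
    fix x :: real
    show "(\<integral>\<^sup>+(h::'a). F h x \<partial>lborel) = ennreal (pi powr D) * ennreal (indicator {0..} x * x powr (s - D - 1) * exp (- c * x))"
    proof (cases "x > 0")
      case False
      hence "F h x = 0" for h unfolding F_def by (auto simp: indicator_def)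
      moreover have "indicator {0..} x * x powr (s - D - 1) = (0::real)" using False by (auto simp: indicator_def)
      ultimately show ?thesis by simp
    next
      case True
      have "F h x = ennreal (x powr (s-1) * exp (- c * x)) * ennreal (exp (- x * norm h^2))" for h
        unfolding F_def using True
        by (simp add: indicator_def ennreal_mult[symmetric] exp_add[symmetric] algebra_simps)
      hence "(\<integral>\<^sup>+(h::'a). F h x \<partial>lborel) = ennreal (x powr (s-1) * exp (- c * x)) * (\<integral>\<^sup>+(h::'a). ennreal (exp (- x * norm h^2)) \<partial>lborel)"
        by (simp add: nn_integral_cmult)
      also have "\<dots> = ennreal (x powr (s-1) * exp (- c * x)) * ennreal ((pi / x) powr D)"
        unfolding D_def using gauss[OF True, where 'a='a] by (simp only:)
      also have "\<dots> = ennreal (pi powr D) * ennreal (indicator {0..} x * x powr (s - D - 1) * exp (- c * x))"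
        using True by (simp add: ennreal_mult[symmetric] powr_divide powr_diff powr_add indicator_def field_simps)
      finally show ?thesis .
    qed
  qed
  also have "\<dots> = ennreal (pi powr D) * (\<integral>\<^sup>+x. ennreal (indicator {0..} x * x powr ((s - D) - 1) * exp (- c * x)) \<partial>lborel)"
    by (rule nn_integral_cmult) simp
  also have "(\<integral>\<^sup>+x. ennreal (indicator {0..} x * x powr ((s - D) - 1) * exp (- c * x)) \<partial>lborel) = ennreal (Gamma (s - D) * c powr (-(s - D)))"
    by (rule gamma_scaled) (use s c D_def in auto)
  finally have X: "(\<integral>\<^sup>+(h::'a). ennreal ((c + norm h^2) powr (-s)) \<partial>lborel) =
     ennreal (1 / Gamma s) * (ennreal (pi powr D) * ennreal (Gamma (s - D) * c powr (-(s - D))))" .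
  have GD: "Gamma (s - D) > 0" using s D_def by (intro Gamma_real_pos) auto
  have "ennreal (1 / Gamma s) * (ennreal (pi powr D) * ennreal (Gamma (s - D) * c powr (-(s - D))))
      = ennreal (1 / Gamma s * (pi powr D * (Gamma (s - D) * c powr (-(s - D)))))"
  proof -
    have "ennreal (pi powr D) * ennreal (Gamma (s - D) * c powr (-(s - D))) = ennreal (pi powr D * (Gamma (s - D) * c powr (-(s - D))))"
      by (rule ennreal_mult[symmetric]) (use GD in auto)
    moreover have "ennreal (1 / Gamma s) * ennreal (pi powr D * (Gamma (s - D) * c powr (-(s - D)))) = ennreal (1 / Gamma s * (pi powr D * (Gamma (s - D) * c powr (-(s - D)))))"
      by (rule ennreal_mult[symmetric]) (use Gs GD in auto)
    ultimately show ?thesis by simp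
  qed
  also have "1 / Gamma s * (pi powr D * (Gamma (s - D) * c powr (-(s - D)))) = pi powr D * Gamma (s - D) / Gamma s * c powr (D - s)"
    by simp
  finally show ?thesis using X unfolding D_def by simp
qed


lemma feynman:
  assumes A: "A > 0" and B: "B > 0" and n: "n > (0::real)"
  shows "(\<integral>\<^sup>+t. ennreal (indicator {0..1} t * (t powr (n-1) * (1-t) powr (n-1)) * (t*A + (1-t)*B) powr (-2*n)) \<partial>lborel)
      = ennreal ((A*B) powr (-n) * Beta n n)"
proof -
  define D where "D = (\<lambda>t. t*A + (1-t)*B)"
  define f where "f = (\<lambda>s::real. s powr (n-1) * (1-s) powr (n-1))"
  define g where "g = (\<lambda>t. t*A / D t)"
  define g' where "g' = (\<lambda>t. A*B / (D t)^2)"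
  have Dpos: "D t > 0" if "t \<in> {0..1}" for t
  proof -
    have "D t = t*A + (1-t)*B" by (simp add: D_def)
    moreover have "t*A \<ge> 0" "(1-t)*B \<ge> 0" using that A B by auto
    moreover have "t*A > 0 \<or> (1-t)*B > 0" using that A B by (cases "t = 0") auto
    ultimately show ?thesis by linarith
  qed
  have g0: "g 0 = 0" and g1: "g 1 = 1" using A by (auto simp: g_def D_def)
  have deriv: "(g has_real_derivative g' t) (at t)" if "t \<in> {0..1}" for t
  proof -
    have "D t \<noteq> 0" using Dpos[OF that] by simp
    hence "(g has_real_derivative ((A * D t - t*A * (A - B)) / (D t)^2)) (at t)"
      unfolding g_def D_def by (auto intro!: derivative_eq_intros simp: power2_eq_square algebra_simps)
    also have "(A * D t - t*A * (A - B)) / (D t)^2 = g' t"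
      unfolding g'_def D_def by (simp add: algebra_simps)
    finally show ?thesis .
  qed
  have contg': "continuous_on {0..1} g'"
  proof -
    have cD: "continuous_on {0..1} D" unfolding D_def by (intro continuous_intros)
    show ?thesis unfolding g'_def
    proof (intro continuous_on_divide continuous_on_const continuous_on_power cD ballI)
      fix x :: real assume "x \<in> {0..1}"
      from Dpos[OF this] show "(D x)^2 \<noteq> 0" by simp
    qed
  qed
  have g'nn: "g' t \<ge> 0" for t using A B by (simp add: g'_def)
  have sub: "(\<integral>\<^sup>+x. ennreal (f x * indicator {g 0..g 1} x) \<partial>lborel) =
             (\<integral>\<^sup>+x. ennreal (f (g x) * g' x * indicator {0..1} x) \<partial>lborel)"
    by (rule nn_integral_substitution[OF _ deriv contg' g'nn]) (auto simp: f_def set_borel_measurable_def)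
  have beta: "(\<integral>\<^sup>+x. ennreal (f x * indicator {g 0..g 1} x) \<partial>lborel) = ennreal (Beta n n)"
  proof -
    have "(\<integral>\<^sup>+x. ennreal (indicator {0..1} x * f x) \<partial>lborel) = ennreal (Beta n n)"
      unfolding f_def by (rule nn_integral_has_integral_lebesgue[OF _ has_integral_Beta_real[OF n n]]) auto
    thus ?thesis unfolding g0 g1 by (simp add: mult.commute)
  qed
  have pw: "indicator {0..1} t * (t powr (n-1) * (1-t) powr (n-1)) * (t*A + (1-t)*B) powr (-2*n)
      = (A*B) powr (-n) * (f (g t) * g' t * indicator {0..1} t)" for t
  proof (cases "t \<in> {0<..<1}")
    case False
    show ?thesis
    proof (cases "t \<in> {0..1}")
      case False thus ?thesis by simp
    next
      case True
      with False have "t = 0 \<or> t = 1" by auto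
      thus ?thesis using A B by (auto simp: f_def g_def D_def)
    qed
  next
    case True
    hence t: "t > 0" "1 - t > 0" by auto
    have Dp: "D t > 0" using Dpos True by auto
    have omg: "1 - g t = (1-t)*B / D t" using Dp unfolding g_def by (simp add: field_simps D_def)
    define P where "P = t powr (n-1)"
    define Q where "Q = (1-t) powr (n-1)"
    define a1 where "a1 = A powr (n-1)"
    define b1 where "b1 = B powr (n-1)"
    define E where "E = D t powr (n-1)"
    have pos: "a1 > 0" "b1 > 0" "E > 0" using A B Dp by (simp_all add: a1_def b1_def E_def)
    have fg: "f (g t) = P * a1 * Q * b1 / (E * E)"
    proof -
      have "f (g t) = (t*A / D t) powr (n-1) * ((1-t)*B / D t) powr (n-1)"
        unfolding f_def omg by (simp add: g_def)
      also have "\<dots> = (t*A) powr (n-1) / E * (((1-t)*B) powr (n-1) / E)"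
        unfolding E_def using t A B Dp by (simp add: powr_divide)
      also have "\<dots> = P * a1 * Q * b1 / (E * E)"
        unfolding P_def Q_def a1_def b1_def using t A B by (simp add: powr_mult)
      finally show ?thesis .
    qed
    have Dn: "(t*A + (1-t)*B) powr (-2*n) = 1 / (E * E * (D t)^2)"
    proof -
      have e: "2*n = (n-1) + (n-1) + 2" by simp
      have "D t powr (2*n) = D t powr (n-1) * D t powr (n-1) * D t powr 2"
        unfolding e by (simp only: powr_add)
      also have "D t powr 2 = (D t)^2" using Dp by simp
      finally have "D t powr (2*n) = E * E * (D t)^2" unfolding E_def .
      moreover have "-2*n = -(2*n)" by simp
      ultimately have "D t powr (-2*n) = inverse (E * E * (D t)^2)" by (simp only: powr_minus)
      thus ?thesis unfolding D_def by (simp add: divide_inverse)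
    qed
    have ABn: "(A*B) powr (-n) = 1 / (a1 * A * b1 * B)"
    proof -
      have eA: "A powr n = a1 * A" unfolding a1_def using A powr_add[of A "n-1" 1] by (simp add: powr_one)
      have eB: "B powr n = b1 * B" unfolding b1_def using B powr_add[of B "n-1" 1] by (simp add: powr_one)
      have "(A*B) powr n = a1 * A * (b1 * B)" by (simp only: powr_mult eA eB)
      thus ?thesis by (simp add: powr_minus divide_inverse mult.assoc)
    qed
    have "indicator {0..1} t * (t powr (n-1) * (1-t) powr (n-1)) * (t*A + (1-t)*B) powr (-2*n) = P * Q * (1 / (E * E * (D t)^2))"
      using True unfolding Dn P_def Q_def by simp
    also have "\<dots> = 1 / (a1 * A * b1 * B) * (P * a1 * Q * b1 / (E * E) * (A*B / (D t)^2) * 1)"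
      using pos A B Dp by (simp add: field_simps)
    also have "\<dots> = (A*B) powr (-n) * (f (g t) * g' t * indicator {0..1} t)"
      unfolding ABn fg g'_def using True by simp
    finally show ?thesis .
  qed
  have "(\<integral>\<^sup>+t. ennreal (indicator {0..1} t * (t powr (n-1) * (1-t) powr (n-1)) * (t*A + (1-t)*B) powr (-2*n)) \<partial>lborel)
      = (\<integral>\<^sup>+t. ennreal ((A*B) powr (-n)) * ennreal (f (g t) * g' t * indicator {0..1} t) \<partial>lborel)"
  proof (intro nn_integral_cong)
    fix t
    have "f (g t) \<ge> 0" by (simp add: f_def)
    hence "f (g t) * g' t * indicator {0..1} t \<ge> 0" using g'nn by simp
    thus "ennreal (indicator {0..1} t * (t powr (n-1) * (1-t) powr (n-1)) * (t*A + (1-t)*B) powr (-2*n))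
        = ennreal ((A*B) powr (-n)) * ennreal (f (g t) * g' t * indicator {0..1} t)"
      unfolding pw by (simp add: ennreal_mult)
  qed
  also have "\<dots> = ennreal ((A*B) powr (-n)) * (\<integral>\<^sup>+t. ennreal (f (g t) * g' t * indicator {0..1} t) \<partial>lborel)"
    by (rule nn_integral_cmult) (auto simp: f_def g_def g'_def D_def)
  also have "\<dots> = ennreal ((A*B) powr (-n) * Beta n n)"
    unfolding sub[symmetric] beta
    by (rule ennreal_mult[symmetric]) (use n in \<open>auto simp: Beta_def Gamma_real_pos less_imp_le\<close>)
  finally show ?thesis .
qed


definition Jr :: "real \<Rightarrow> real \<Rightarrow> real \<Rightarrow> real" where
  "Jr p a u = integral {0..pi} (\<lambda>t. sin t powr (2*p-1) * (1 + u * (sin t)^2) powr (-a))"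

lemma Jr_int:
  assumes p: "p > 1/2" and u: "u \<ge> 0"
  shows "((\<lambda>t. sin t powr (2*p-1) * (1 + u * (sin t)^2) powr (-a)) has_integral Jr p a u) {0..pi}"
proof -
  have c1: "continuous_on {0..pi} (\<lambda>t. sin t powr (2*p-1))" using p by (intro sinpow_cont) simp
  have c2: "continuous_on {0..pi} (\<lambda>t. (1 + u * (sin t)^2) powr (-a))"
  proof (rule continuous_on_powr)
    show "\<forall>x\<in>{0..pi}. 1 + u * (sin x)^2 \<noteq> 0"
    proof
      fix x :: real
      have "1 + u * (sin x)^2 > 0" using u by (intro add_pos_nonneg) auto
      thus "1 + u * (sin x)^2 \<noteq> 0" by simp
    qed
  qed (intro continuous_intros)+
  have "continuous_on {0..pi} (\<lambda>t. sin t powr (2*p-1) * (1 + u * (sin t)^2) powr (-a))"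
    by (rule continuous_on_mult[OF c1 c2])
  thus ?thesis unfolding Jr_def using integrable_continuous_interval by blast
qed

lemma Jr_nonneg:
  assumes p: "p > 1/2" and u: "u \<ge> 0"
  shows "Jr p a u \<ge> 0"
  by (rule has_integral_nonneg[OF Jr_int[OF p u]]) simp

lemma Jr_0: "Jr p a 0 = Isin (2*p-1)"
  by (simp add: Jr_def Isin_def)

lemma Phi_Jr:
  assumes p: "p > 1/2" and u: "u \<ge> 0"
  shows "Phi p a (complex_of_real (-u)) = complex_of_real (Jr p a u)"
proof -
  have "((\<lambda>t. complex_of_real (sin t powr (2*p-1) * (1 + u * (sin t)^2) powr (-a))) has_integral complex_of_real (Jr p a u)) {0..pi}"
    by (rule has_integral_of_real[OF Jr_int[OF p u]])
  moreover have "(\<lambda>t. complex_of_real (sin t powr (2*p-1) * (1 + u * (sin t)^2) powr (-a))) =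
      (\<lambda>t. complex_of_real (sin t powr (2*p-1)) * (1 - complex_of_real (-u) * complex_of_real ((sin t)^2)) powr complex_of_real (-a))"
  proof
    fix t
    have "1 - complex_of_real (-u) * complex_of_real ((sin t)^2) = complex_of_real (1 + u * (sin t)^2)" by simp
    moreover have "complex_of_real (1 + u * (sin t)^2) powr complex_of_real (-a) = complex_of_real ((1 + u * (sin t)^2) powr (-a))"
      using u by (intro powr_of_real) (simp add: add_nonneg_nonneg)
    ultimately show "complex_of_real (sin t powr (2*p-1) * (1 + u * (sin t)^2) powr (-a)) =
      complex_of_real (sin t powr (2*p-1)) * (1 - complex_of_real (-u) * complex_of_real ((sin t)^2)) powr complex_of_real (-a)"
      by (simp only: of_real_mult)
  qed
  ultimately have "((\<lambda>t. complex_of_real (sin t powr (2*p-1)) * (1 - complex_of_real (-u) * complex_of_real ((sin t)^2)) powr complex_of_real (-a))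
       has_integral complex_of_real (Jr p a u)) {0..pi}" by simp
  thus ?thesis unfolding Phi_def by (rule integral_unique)
qed

lemma subst_sin:
  assumes n: "n > 1/2" and K: "K \<ge> 0"
  shows "(\<integral>\<^sup>+t. ennreal (indicator {0..1} t * (t powr (n-1) * (1-t) powr (n-1)) * (1 + t*(1-t)*K) powr (-a)) \<partial>lborel)
     = ennreal (2 powr (1-2*n) * Jr n a (K/4))"
proof -
  define f where "f = (\<lambda>x::real. x powr (n-1) * (1-x) powr (n-1) * (1 + x*(1-x)*K) powr (-a))"
  define g where "g = (\<lambda>x::real. (1 - cos x) / 2)"
  define g' where "g' = (\<lambda>x::real. sin x / 2)"
  define h where "h = (\<lambda>t. sin t powr (2*n-1) * (1 + K/4 * (sin t)^2) powr (-a))"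
  have deriv: "(g has_real_derivative g' x) (at x)" for x
    unfolding g_def g'_def by (auto intro!: derivative_eq_intros)
  have contg': "continuous_on {0..pi} g'" unfolding g'_def by (intro continuous_intros) auto
  have g'nn: "x \<in> {0..pi} \<Longrightarrow> g' x \<ge> 0" for x unfolding g'_def by (simp add: sin_ge_zero)
  have g0: "g 0 = 0" and gpi: "g pi = 1" by (simp_all add: g_def)
  have sub: "(\<integral>\<^sup>+x. ennreal (f x * indicator {g 0..g pi} x) \<partial>lborel) =
             (\<integral>\<^sup>+x. ennreal (f (g x) * g' x * indicator {0..pi} x) \<partial>lborel)"
    by (rule nn_integral_substitution[OF _ deriv contg' g'nn]) (auto simp: f_def set_borel_measurable_def)
  have pw: "f (g x) * g' x = 2 powr (1-2*n) * h x" if x: "x \<in> {0..pi}" for x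
  proof -
    have gg: "g x * (1 - g x) = (sin x / 2)^2"
    proof -
      have "g x * (1 - g x) = (1 - (cos x)^2) / 4" unfolding g_def by (simp add: field_simps power2_eq_square)
      also have "1 - (cos x)^2 = (sin x)^2" by (simp add: sin_squared_eq)
      finally show ?thesis by (simp add: power_divide)
    qed
    have "f (g x) = (g x * (1 - g x)) powr (n-1) * (1 + g x * (1 - g x) * K) powr (-a)"
      unfolding f_def by (simp add: powr_mult)
    also have "\<dots> = ((sin x / 2)^2) powr (n-1) * (1 + K/4 * (sin x)^2) powr (-a)"
      unfolding gg by (simp add: power_divide algebra_simps)
    finally have fg: "f (g x) = ((sin x / 2)^2) powr (n-1) * (1 + K/4 * (sin x)^2) powr (-a)" .
    show ?thesis
    proof (cases "sin x = 0")
      case True thus ?thesis using n by (simp add: g'_def h_def)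
    next
      case False
      hence S: "sin x / 2 > 0" using sin_ge_zero[of x] x by auto
      have "((sin x / 2)^2) powr (n-1) * (sin x / 2) = (sin x / 2) powr (2*n-1)"
      proof -
        have "((sin x / 2)^2) powr (n-1) = (sin x / 2) powr (2*(n-1))"
        proof -
          have "(sin x / 2)^2 = (sin x / 2) powr 2" using S by simp
          hence "((sin x / 2)^2) powr (n-1) = ((sin x / 2) powr 2) powr (n-1)" by (simp only:)
          also have "\<dots> = (sin x / 2) powr (2 * (n-1))" by (rule powr_powr)
          finally show ?thesis .
        qed
        moreover have "(sin x / 2) powr (2*(n-1)) * (sin x / 2) = (sin x / 2) powr (2*n-1)"
          using S powr_add[of "sin x / 2" "2*(n-1)" 1] by (simp add: powr_one algebra_simps)
        ultimately show ?thesis by simp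
      qed
      also have "(sin x / 2) powr (2*n-1) = 2 powr (1-2*n) * sin x powr (2*n-1)"
      proof -
        have e1: "(sin x / 2) powr (2*n-1) = sin x powr (2*n-1) / 2 powr (2*n-1)" by (rule powr_divide)
        have "2 powr (1-2*n) = (2::real) powr (-(2*n-1))" by simp
        also have "\<dots> = inverse (2 powr (2*n-1))" by (rule powr_minus)
        finally have e2: "2 powr (1-2*n) = inverse ((2::real) powr (2*n-1))" .
        show ?thesis unfolding e1 e2 by (simp only: divide_inverse mult.commute)
      qed
      finally have "((sin x / 2)^2) powr (n-1) * (sin x / 2) = 2 powr (1-2*n) * sin x powr (2*n-1)" .
      thus ?thesis unfolding fg g'_def h_def by (simp add: algebra_simps)
    qed
  qed
  have "(\<integral>\<^sup>+t. ennreal (indicator {0..1} t * (t powr (n-1) * (1-t) powr (n-1)) * (1 + t*(1-t)*K) powr (-a)) \<partial>lborel)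
      = (\<integral>\<^sup>+x. ennreal (f x * indicator {g 0..g pi} x) \<partial>lborel)"
    unfolding g0 gpi f_def by (intro nn_integral_cong) (simp add: algebra_simps)
  also have "\<dots> = (\<integral>\<^sup>+x. ennreal (2 powr (1-2*n)) * ennreal (indicator {0..pi} x * h x) \<partial>lborel)"
    unfolding sub
  proof (intro nn_integral_cong)
    fix x
    have hnn: "h x \<ge> 0" unfolding h_def by simp
    show "ennreal (f (g x) * g' x * indicator {0..pi} x) = ennreal (2 powr (1-2*n)) * ennreal (indicator {0..pi} x * h x)"
    proof (cases "x \<in> {0..pi}")
      case True thus ?thesis using pw[OF True] hnn by (simp add: ennreal_mult)
    qed simp
  qed
  also have "\<dots> = ennreal (2 powr (1-2*n)) * (\<integral>\<^sup>+x. ennreal (indicator {0..pi} x * h x) \<partial>lborel)"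
    by (rule nn_integral_cmult) (simp add: h_def)
  also have "(\<integral>\<^sup>+x. ennreal (indicator {0..pi} x * h x) \<partial>lborel) = ennreal (Jr n a (K/4))"
    unfolding h_def by (rule nn_integral_has_integral_lebesgue[OF _ Jr_int[OF n]]) (use K in auto)
  also have "ennreal (2 powr (1-2*n)) * ennreal (Jr n a (K/4)) = ennreal (2 powr (1-2*n) * Jr n a (K/4))"
    by (rule ennreal_mult[symmetric]) (use Jr_nonneg[OF n, of "K/4"] K in auto)
  finally show ?thesis .
qed


lemma quad_id:
  fixes k h :: "'a::real_inner"
  shows "t * (1 + norm (k - h)^2) + (1 - t) * (1 + norm h^2) = (1 + t*(1-t)*norm k^2) + norm (h - t *\<^sub>R k)^2"
  unfolding power2_norm_eq_inner
  by (simp add: inner_diff_left inner_diff_right inner_commute algebra_simps power2_eq_square)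

lemma translate_radial:
  fixes c :: "'a::euclidean_space"
  shows "(\<integral>\<^sup>+(h::'a). ennreal ((C + norm (h - c)^2) powr (-s)) \<partial>lborel) = (\<integral>\<^sup>+(h::'a). ennreal ((C + norm h^2) powr (-s)) \<partial>lborel)"
proof -
  have "(\<integral>\<^sup>+(h::'a). ennreal ((C + norm (h - c)^2) powr (-s)) \<partial>lborel) =
        (\<integral>\<^sup>+(h::'a). ennreal ((C + norm (h - c)^2) powr (-s)) \<partial>distr lborel borel ((+) c))"
    by (simp only: lborel_distr_plus)
  also have "\<dots> = (\<integral>\<^sup>+(h::'a). ennreal ((C + norm ((c + h) - c)^2) powr (-s)) \<partial>lborel)"
    by (rule nn_integral_distr) auto
  finally show ?thesis by simp
qed

lemma conv_value:
  fixes n :: real and k :: "real ^ 'd"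
  assumes nd: "n > real CARD('d) / 2"
  shows "conv (G_nd n) (G_nd n) k = pi powr (CARD('d)/2) * Gamma (2*n - CARD('d)/2) / Gamma (2*n)
           * Jr n (2*n - CARD('d)/2) (norm k^2/4) / Isin (2*n-1)"
proof -
  define d where "d = real CARD('d)"
  have dim: "real DIM(real^'d) = d" by (simp add: d_def)
  have d1: "d \<ge> 1" by (simp add: d_def)
  have nd': "n > d/2" using nd by (simp add: d_def)
  have n: "n > 1/2" using nd' d1 by linarith
  have n0: "n > 0" using n by linarith
  define a where "a = 2*n - d/2"
  define K where "K = norm k^2"
  have K0: "K \<ge> 0" by (simp add: K_def)
  define \<beta> where "\<beta> = Beta n n"
  have \<beta>pos: "\<beta> > 0" unfolding \<beta>_def Beta_def using n0 by (simp add: Gamma_real_pos)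
  define w where "w = (\<lambda>t::real. t powr (n-1) * (1-t) powr (n-1))"
  have wnn: "w t \<ge> 0" for t by (simp add: w_def)
  define F where "F = (\<lambda>(h::real^'d) (t::real). ennreal (indicator {0..1} t * w t *
        (t * (1 + norm (k-h)^2) + (1-t)*(1+norm h^2)) powr (-2*n)))"
  define Cd where "Cd = pi powr (d/2) * Gamma (2*n - d/2) / Gamma (2*n)"
  have Cdpos: "Cd > 0" unfolding Cd_def using nd' n0 by (simp add: Gamma_real_pos)
  have meas: "case_prod F \<in> borel_measurable (lborel \<Otimes>\<^sub>M lborel)"
    unfolding F_def w_def by measurable
  have step1: "ennreal (G_nd n (k - h) * G_nd n h) = ennreal (1/\<beta>) * (\<integral>\<^sup>+t. F h t \<partial>lborel)" for h
  proof -
    have A: "1 + norm (k-h)^2 > 0" by (simp add: add_pos_nonneg)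
    have B: "1 + norm h^2 > 0" by (simp add: add_pos_nonneg)
    have "(\<integral>\<^sup>+t. F h t \<partial>lborel) = ennreal (((1 + norm (k-h)^2) * (1 + norm h^2)) powr (-n) * \<beta>)"
      unfolding F_def w_def \<beta>_def by (rule feynman[OF A B n0])
    moreover have "G_nd n (k - h) * G_nd n h = ((1 + norm (k-h)^2) * (1 + norm h^2)) powr (-n)"
      unfolding G_nd_def by (simp add: powr_mult)
    moreover have "ennreal (1/\<beta>) * ennreal (((1 + norm (k-h)^2) * (1 + norm h^2)) powr (-n) * \<beta>)
        = ennreal (((1 + norm (k-h)^2) * (1 + norm h^2)) powr (-n))"
      using \<beta>pos by (simp add: ennreal_mult[symmetric])
    ultimately show ?thesis by simp
  qed
  have inner: "(\<integral>\<^sup>+h. F h t \<partial>lborel) = ennreal Cd * ennreal (indicator {0..1} t * w t * (1 + t*(1-t)*K) powr (-a))" for t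
  proof (cases "t \<in> {0..1}")
    case False
    thus ?thesis by (simp add: F_def)
  next
    case True
    define c where "c = 1 + t*(1-t)*K"
    have cpos: "c > 0" unfolding c_def using True K0 by (intro add_pos_nonneg) auto
    have "F h t = ennreal (w t) * ennreal ((c + norm (h - t *\<^sub>R k)^2) powr (-2*n))" for h
      unfolding F_def using True wnn by (simp add: quad_id c_def K_def ennreal_mult)
    hence "(\<integral>\<^sup>+h. F h t \<partial>lborel) = ennreal (w t) * (\<integral>\<^sup>+(h::real^'d). ennreal ((c + norm (h - t *\<^sub>R k)^2) powr (-2*n)) \<partial>lborel)"
      by (simp add: nn_integral_cmult)
    also have "(\<integral>\<^sup>+(h::real^'d). ennreal ((c + norm (h - t *\<^sub>R k)^2) powr (-2*n)) \<partial>lborel)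
        = (\<integral>\<^sup>+(h::real^'d). ennreal ((c + norm h^2) powr (-(2*n))) \<partial>lborel)"
      using translate_radial[of c "t *\<^sub>R k" "2*n"] by simp
    also have "\<dots> = ennreal (pi powr (DIM(real^'d)/2) * Gamma (2*n - DIM(real^'d)/2) / Gamma (2*n) * c powr (DIM(real^'d)/2 - 2*n))"
      by (rule radial[OF cpos]) (use nd' dim in simp)
    also have "\<dots> = ennreal (Cd * c powr (-a))" unfolding dim Cd_def a_def by simp
    finally have "(\<integral>\<^sup>+h. F h t \<partial>lborel) = ennreal (w t) * ennreal (Cd * c powr (-a))" .
    also have "\<dots> = ennreal Cd * ennreal (indicator {0..1} t * w t * (1 + t*(1-t)*K) powr (-a))"
      using True Cdpos wnn by (simp add: c_def ennreal_mult[symmetric] mult_ac)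
    finally show ?thesis .
  qed
  have "(\<integral>\<^sup>+h. ennreal (G_nd n (k - h) * G_nd n h) \<partial>lborel) = (\<integral>\<^sup>+h. ennreal (1/\<beta>) * (\<integral>\<^sup>+t. F h t \<partial>lborel) \<partial>lborel)"
    by (rule nn_integral_cong) (rule step1)
  also have "\<dots> = ennreal (1/\<beta>) * (\<integral>\<^sup>+h. (\<integral>\<^sup>+t. F h t \<partial>lborel) \<partial>lborel)"
    by (rule nn_integral_cmult) (rule lborel.borel_measurable_nn_integral[OF meas])
  also have "(\<integral>\<^sup>+h. (\<integral>\<^sup>+t. F h t \<partial>lborel) \<partial>lborel) = (\<integral>\<^sup>+t. (\<integral>\<^sup>+h. F h t \<partial>lborel) \<partial>lborel)"
    by (rule lborel_pair.Fubini'[OF meas, symmetric])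
  also have "\<dots> = (\<integral>\<^sup>+t. ennreal Cd * ennreal (indicator {0..1} t * w t * (1 + t*(1-t)*K) powr (-a)) \<partial>lborel)"
    by (rule nn_integral_cong) (rule inner)
  also have "\<dots> = ennreal Cd * (\<integral>\<^sup>+t. ennreal (indicator {0..1} t * w t * (1 + t*(1-t)*K) powr (-a)) \<partial>lborel)"
    by (rule nn_integral_cmult) (simp add: w_def)
  also have "(\<integral>\<^sup>+t. ennreal (indicator {0..1} t * w t * (1 + t*(1-t)*K) powr (-a)) \<partial>lborel) = ennreal (2 powr (1-2*n) * Jr n a (K/4))"
    unfolding w_def by (rule subst_sin[OF n K0])
  finally have tot: "(\<integral>\<^sup>+h. ennreal (G_nd n (k - h) * G_nd n h) \<partial>lborel) = ennreal (1/\<beta>) * (ennreal Cd * ennreal (2 powr (1-2*n) * Jr n a (K/4)))" .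
  have \<beta>eq: "\<beta> = 2 powr (1-2*n) * Isin (2*n-1)"
  proof -
    have "(\<integral>\<^sup>+t. ennreal (indicator {0..1} t * (t powr (n-1) * (1-t) powr (n-1)) * (1 + t*(1-t)*0) powr (-a)) \<partial>lborel) = ennreal (2 powr (1-2*n) * Jr n a (0/4))"
      by (rule subst_sin[OF n]) simp
    moreover have "(\<integral>\<^sup>+t. ennreal (indicator {0..1} t * (t powr (n-1) * (1-t) powr (n-1)) * (1 + t*(1-t)*0) powr (-a)) \<partial>lborel) = ennreal \<beta>"
    proof -
      have "(\<integral>\<^sup>+t. ennreal (indicator {0..1} t * (t powr (n-1) * (1-t) powr (n-1))) \<partial>lborel) = ennreal \<beta>"
        unfolding \<beta>_def by (rule nn_integral_has_integral_lebesgue[OF _ has_integral_Beta_real[OF n0 n0]]) auto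
      thus ?thesis by simp
    qed
    ultimately have "ennreal \<beta> = ennreal (2 powr (1-2*n) * Jr n a 0)" by simp
    hence "\<beta> = 2 powr (1-2*n) * Jr n a 0"
      using \<beta>pos Jr_nonneg[OF n, of 0 a] by (subst (asm) ennreal_inj) auto
    thus ?thesis by (simp add: Jr_0)
  qed
  have JK: "Jr n a (K/4) \<ge> 0" using Jr_nonneg[OF n, of "K/4" a] K0 by simp
  have "ennreal (1/\<beta>) * (ennreal Cd * ennreal (2 powr (1-2*n) * Jr n a (K/4))) = ennreal (1/\<beta> * (Cd * (2 powr (1-2*n) * Jr n a (K/4))))"
    using \<beta>pos Cdpos JK by (simp add: ennreal_mult[symmetric])
  also have "1/\<beta> * (Cd * (2 powr (1-2*n) * Jr n a (K/4))) = Cd * Jr n a (K/4) / Isin (2*n-1)"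
    unfolding \<beta>eq using \<beta>pos \<beta>eq by (simp add: field_simps)
  finally have tot2: "(\<integral>\<^sup>+h. ennreal (G_nd n (k - h) * G_nd n h) \<partial>lborel) = ennreal (Cd * Jr n a (K/4) / Isin (2*n-1))"
    using tot by simp
  have Ipos: "Isin (2*n-1) > 0" using \<beta>pos \<beta>eq by (simp add: zero_less_mult_iff)
  have "conv (G_nd n) (G_nd n) k = enn2real (\<integral>\<^sup>+h. ennreal (G_nd n (k - h) * G_nd n h) \<partial>lborel)"
    unfolding conv_def by (rule integral_eq_nn_integral) (auto simp: G_nd_def)
  also have "\<dots> = Cd * Jr n a (K/4) / Isin (2*n-1)"
    unfolding tot2 using Cdpos JK Ipos by simp
  finally show ?thesis unfolding Cd_def a_def K_def d_def .
qed


lemma Isin_pos: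
  assumes n: "n > 1/2"
  shows "Isin (2*n-1) > 0"
proof -
  have n0: "n > 0" using n by simp
  have bpos: "Beta n n > 0" unfolding Beta_def using n0 by (simp add: Gamma_real_pos)
  have "(\<integral>\<^sup>+t. ennreal (indicator {0..1} t * (t powr (n-1) * (1-t) powr (n-1)) * (1 + t*(1-t)*0) powr (-1)) \<partial>lborel) = ennreal (2 powr (1-2*n) * Jr n 1 (0/4))"
    by (rule subst_sin[OF n]) simp
  moreover have "(\<integral>\<^sup>+t. ennreal (indicator {0..1} t * (t powr (n-1) * (1-t) powr (n-1)) * (1 + t*(1-t)*0) powr (-1)) \<partial>lborel) = ennreal (Beta n n)"
  proof -
    have "(\<integral>\<^sup>+t. ennreal (indicator {0..1} t * (t powr (n-1) * (1-t) powr (n-1))) \<partial>lborel) = ennreal (Beta n n)"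
      by (rule nn_integral_has_integral_lebesgue[OF _ has_integral_Beta_real[OF n0 n0]]) auto
    thus ?thesis by simp
  qed
  ultimately have "ennreal (Beta n n) = ennreal (2 powr (1-2*n) * Jr n 1 0)" by simp
  hence "Beta n n = 2 powr (1-2*n) * Jr n 1 0"
    using bpos Jr_nonneg[OF n, of 0 1] by (subst (asm) ennreal_inj) auto
  hence "Beta n n = 2 powr (1-2*n) * Isin (2*n-1)" by (simp add: Jr_0)
  with bpos show ?thesis by (simp add: zero_less_mult_iff)
qed

theorem lemma4p2:
  fixes n :: real and k :: "real ^ 'd"
  assumes "n > real CARD('d) / 2"
  shows "complex_of_real ((1 + norm k ^ 2) powr n / (2*pi) ^ CARD('d)
            * conv (G_nd n) (G_nd n) k)
         = S_nd n CARD('d) (norm k ^ 2 / 4)"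
proof -
  define d where "d = real CARD('d)"
  have d1: "d \<ge> 1" by (simp add: d_def)
  have nd': "n > d/2" using assms by (simp add: d_def)
  have n: "n > 1/2" using nd' d1 by linarith
  define a where "a = 2*n - d/2"
  define K where "K = norm k^2"
  have K0: "K \<ge> 0" by (simp add: K_def)
  define u where "u = K/4"
  have u0: "u \<ge> 0" using K0 by (simp add: u_def)
  define I0 where "I0 = Isin (2*n-1)"
  have I0: "I0 > 0" unfolding I0_def by (rule Isin_pos[OF n])
  define J where "J = Jr n a u"
  define P where "P = pi powr (d/2)"
  have Ppos: "P > 0" by (simp add: P_def)
  have conv: "conv (G_nd n) (G_nd n) k = P * Gamma a / Gamma (2*n) * J / I0"
    using conv_value[OF assms, of k] unfolding P_def a_def J_def u_def K_def I0_def d_def by simp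
  have zc: "complex_of_real (-u) \<in> cut_plane" using u0 by (simp add: cut_plane_def)
  have hyp: "hyp2F1 (complex_of_real a) (complex_of_real n) (complex_of_real (n + 1/2)) (complex_of_real (-u))
      = complex_of_real (J / I0)"
    using hyp2F1_Phi[OF n _ zc, of a] I0 Phi_Jr[OF n u0, of a] unfolding I0_def J_def by simp
  have e1: "(4*pi) powr (d/2) = 2 ^ CARD('d) * P"
  proof -
    have "(4::real) powr (d/2) = (2 powr 2) powr (d/2)" by simp
    also have "\<dots> = 2 powr d" by (simp add: powr_powr)
    also have "\<dots> = 2 ^ CARD('d)" unfolding d_def by (simp add: powr_realpow)
    finally show ?thesis unfolding P_def by (simp add: powr_mult)
  qed
  have e2: "(2*pi) ^ CARD('d) = 2 ^ CARD('d) * (P * P)"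
  proof -
    have "pi ^ CARD('d) = pi powr d" unfolding d_def by (simp add: powr_realpow)
    also have "\<dots> = P * P" unfolding P_def by (simp add: powr_add[symmetric])
    finally show ?thesis by (simp add: power_mult_distrib)
  qed
  have "S_nd n CARD('d) (norm k ^ 2 / 4) = complex_of_real (Gamma a / (2 ^ CARD('d) * P * Gamma (2*n)) * (1 + K) powr n)
       * complex_of_real (J / I0)"
    unfolding S_nd_def hyp[unfolded a_def d_def u_def K_def, symmetric]
    by (simp add: e1[unfolded d_def] a_def d_def K_def mult.assoc)
  also have "\<dots> = complex_of_real ((1 + K) powr n / (2*pi) ^ CARD('d) * (P * Gamma a / Gamma (2*n) * J / I0))"
    unfolding e2 of_real_mult[symmetric] using Ppos I0 by (simp add: field_simps)
  finally show ?thesis unfolding conv K_def by simp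
qed


end
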